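(* Let $p,q$ be relatively prime positive integers, $k\ge1$ an integer, $\mu\in\mathbb{C}$, and consider the closed meromorphic $1$-form on $(\mathbb{C}^2,0)$ $$\tau=(\mu-1)p\frac{\mathrm{d}x}{x}+\mu q\frac{\mathrm{d}y}{y}-\mathrm{d}\left(\frac{1}{k(x^py^q)^k}\right),$$ and let $\mathcal{F}$ be the real analytic Levi-flat foliation defined by the real $1$-form $\mathrm{Re}(\tau)$. Then there exists a $C^\infty$ submersion, defined on the complement of $\{xy=0\}$ in a neighborhood of $0\in\mathbb{C}^2$, which is a first integral of $\mathcal{F}$.
   Context: $\tau$ is $\eta/(xy(x^py^q)^k)$ where $\eta=py(1+(\mu-1)(x^py^q)^k)\mathrm{d}x+qx(1+\mu(x^py^q)^k)\mathrm{d}y$ defines a resonant holomorphic foliation. A first integral of a foliation is a function constant along its leaves. *)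

theory Defs
  imports "HOL-Analysis.Analysis"
begin

text \<open>D vs x is the iterated derivative of f at x applied to the directions in vs;
  for every list of directions, D vs is differentiable at every point of S with
  derivative v \<mapsto> D (v # vs) x.\<close>
definition smooth_on :: "'a::real_normed_vector set \<Rightarrow> ('a \<Rightarrow> 'b::real_normed_vector) \<Rightarrow> bool" where
  "smooth_on S f \<longleftrightarrow>
     (\<exists>D :: 'a list \<Rightarrow> 'a \<Rightarrow> 'b.
        (\<forall>x\<in>S. D [] x = f x) \<and>
        (\<forall>vs. \<forall>x\<in>S. (D vs has_derivative (\<lambda>v. D (v # vs) x)) (at x)))"

definition off_axes :: "(complex \<times> complex) set" where
  "off_axes = {z. fst z * snd z \<noteq> 0}"

text \<open>Here d(1/(k w^k)) = - w^(-k-1) dw with w = x^p y^q, i.e.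
  d(1/(k (x^p y^q)^k)) = -(p x^(p-1) y^q dx + q x^p y^(q-1) dy) / (x^p y^q)^(k+1).\<close>
definition tau :: "nat \<Rightarrow> nat \<Rightarrow> nat \<Rightarrow> complex \<Rightarrow> complex \<times> complex \<Rightarrow> complex \<times> complex \<Rightarrow> complex" where
  "tau p q k \<mu> z v =
     (let x = fst z; y = snd z; a = fst v; b = snd v in
        (\<mu> - 1) * of_nat p * a / x + \<mu> * of_nat q * b / y
        - ( - (of_nat p * x ^ (p - 1) * y ^ q * a + of_nat q * x ^ p * y ^ (q - 1) * b)
              / (x ^ p * y ^ q) ^ (k + 1)))"

definition re_tau :: "nat \<Rightarrow> nat \<Rightarrow> nat \<Rightarrow> complex \<Rightarrow> complex \<times> complex \<Rightarrow> complex \<times> complex \<Rightarrow> real" where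
  "re_tau p q k \<mu> z v = Re (tau p q k \<mu> z v)"

end

theory Submission
  imports Defs "HOL-Computational_Algebra.Polynomial" "HOL-Real_Asymp.Real_Asymp"
begin


primrec itd :: "(('a \<Rightarrow> 'b) \<Rightarrow> 'a \<Rightarrow> 'a \<Rightarrow> 'b) \<Rightarrow> ('a \<Rightarrow> 'b) \<Rightarrow> 'a list \<Rightarrow> 'a \<Rightarrow> 'b" where
  "itd dr f [] = f"
| "itd dr f (v # vs) = (\<lambda>x. dr (itd dr f vs) x v)"

lemma smooth_coinduct:
  assumes P0: "P f"
    and step: "\<And>g. P g \<Longrightarrow> \<exists>g'. (\<forall>x\<in>S. (g has_derivative g' x) (at x)) \<and> (\<forall>v. P (\<lambda>x. g' x v))"
  shows "smooth_on S f"
proof -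
  define dr where "dr = (\<lambda>g. SOME g'. (\<forall>x\<in>S. (g has_derivative g' x) (at x)) \<and> (\<forall>v. P (\<lambda>x. g' x v)))"
  have drP: "(\<forall>x\<in>S. (g has_derivative dr g x) (at x)) \<and> (\<forall>v. P (\<lambda>x. dr g x v))" if "P g" for g
    unfolding dr_def using someI_ex[OF step[OF that]] .
  have Pi: "P (itd dr f vs)" for vs
    by (induction vs) (use P0 drP in auto)
  show ?thesis unfolding smooth_on_def
    by (rule exI[of _ "itd dr f"]) (use drP Pi in auto)
qed

lemma smooth_on_transform:
  "smooth_on N f \<Longrightarrow> (\<And>x. x \<in> N \<Longrightarrow> f x = g x) \<Longrightarrow> smooth_on N g"
  unfolding smooth_on_def by auto

lemma smooth_on_subset:
  "smooth_on N f \<Longrightarrow> M \<subseteq> N \<Longrightarrow> smooth_on M f"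
  unfolding smooth_on_def by blast

lemma smooth_on_shift:
  assumes "smooth_on N f"
  obtains D where "\<forall>x\<in>N. D [] x = f x" "\<forall>vs. \<forall>x\<in>N. (D vs has_derivative (\<lambda>v. D (v # vs) x)) (at x)"
    "\<And>v. smooth_on N (\<lambda>x. D [v] x)"
proof -
  obtain D where D: "\<forall>x\<in>N. D [] x = f x" "\<forall>vs. \<forall>x\<in>N. (D vs has_derivative (\<lambda>v. D (v # vs) x)) (at x)"
    using assms unfolding smooth_on_def by blast
  have "smooth_on N (\<lambda>x. D [v] x)" for v
    unfolding smooth_on_def
    by (rule exI[of _ "\<lambda>vs. D (vs @ [v])"]) (use D in auto)
  with D that show ?thesis by blast
qed

lemma smooth_on_hasder:
  assumes "smooth_on N f" "open N"
  shows "\<exists>D. (\<forall>x\<in>N. (f has_derivative (\<lambda>v. D [v] x)) (at x)) \<and> (\<forall>v. smooth_on N (\<lambda>x. D [v] x))"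
proof -
  obtain D where D: "\<forall>x\<in>N. D [] x = f x" "\<forall>vs. \<forall>x\<in>N. (D vs has_derivative (\<lambda>v. D (v # vs) x)) (at x)"
    "\<And>v. smooth_on N (\<lambda>x. D [v] x)"
    using smooth_on_shift[OF assms(1)] by blast
  have "\<forall>x\<in>N. (f has_derivative (\<lambda>v. D [v] x)) (at x)"
    using D(1,2) assms(2) by (metis has_derivative_transform_within_open)
  with D(3) show ?thesis by blast
qed

lemma smooth_on_local:
  assumes S: "open S" and loc: "\<And>x. x \<in> S \<Longrightarrow> \<exists>N. open N \<and> x \<in> N \<and> smooth_on N f"
  shows "smooth_on S f"
proof (rule smooth_coinduct[where P="\<lambda>g. \<forall>x\<in>S. \<exists>N. open N \<and> x \<in> N \<and> smooth_on N g"])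
  show "\<forall>x\<in>S. \<exists>N. open N \<and> x \<in> N \<and> smooth_on N f" using loc by blast
next
  fix g assume P: "\<forall>x\<in>S. \<exists>N. open N \<and> x \<in> N \<and> smooth_on N g"
  define g' where "g' = (\<lambda>x. SOME D. (g has_derivative D) (at x))"
  have loc2: "\<exists>N D. open N \<and> x \<in> N \<and> (\<forall>y\<in>N. (g has_derivative (\<lambda>v. D [v] y)) (at y)) \<and> (\<forall>v. smooth_on N (\<lambda>y. D [v] y))"
    if "x \<in> S" for x
  proof -
    from P that obtain N where N: "open N" "x \<in> N" "smooth_on N g" by auto
    from smooth_on_hasder[OF N(3,1)] N(1,2) show ?thesis by auto
  qed
  have g'1: "(g has_derivative g' x) (at x)" if "x \<in> S" for x
  proof -
    from loc2[OF that] obtain N D where "x \<in> N" "\<forall>y\<in>N. (g has_derivative (\<lambda>v. D [v] y)) (at y)" by auto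
    then have "(g has_derivative (\<lambda>v. D [v] x)) (at x)" by auto
    then show ?thesis unfolding g'_def by (rule someI[where P="\<lambda>D. (g has_derivative D) (at x)"])
  qed
  have "\<forall>x\<in>S. \<exists>N. open N \<and> x \<in> N \<and> smooth_on N (\<lambda>x. g' x v)" for v
  proof
    fix x assume x: "x \<in> S"
    from loc2[OF x] obtain N D where N: "open N" "x \<in> N"
      and D: "\<forall>y\<in>N. (g has_derivative (\<lambda>v. D [v] y)) (at y)" "\<forall>v. smooth_on N (\<lambda>y. D [v] y)" by auto
    have "smooth_on (N \<inter> S) (\<lambda>x. g' x v)"
    proof (rule smooth_on_transform)
      show "smooth_on (N \<inter> S) (\<lambda>y. D [v] y)" using D(2) smooth_on_subset by blast
      fix y assume y: "y \<in> N \<inter> S"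
      have "g' y = (\<lambda>v. D [v] y)"
        by (rule has_derivative_unique[OF g'1]) (use y D(1) in auto)
      then show "D [v] y = g' y v" by simp
    qed
    then show "\<exists>N. open N \<and> x \<in> N \<and> smooth_on N (\<lambda>x. g' x v)"
      using N S x by (intro exI[of _ "N \<inter> S"]) auto
  qed
  then show "\<exists>g'. (\<forall>x\<in>S. (g has_derivative g' x) (at x)) \<and> (\<forall>v. \<forall>x\<in>S. \<exists>N. open N \<and> x \<in> N \<and> smooth_on N (\<lambda>x. g' x v))"
    using g'1 by blast
qed

lemma smooth_on_real_fam:
  fixes f :: "real \<Rightarrow> real"
  assumes "\<And>t. t \<in> I \<Longrightarrow> d 0 t = f t"
    and "\<And>n t. t \<in> I \<Longrightarrow> (d n has_real_derivative d (Suc n) t) (at t)"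
  shows "smooth_on I f"
  unfolding smooth_on_def
proof (rule exI[of _ "\<lambda>vs t. prod_list vs * d (length vs) t"], intro conjI ballI allI)
  fix x assume "x \<in> I" then show "prod_list [] * d (length []) x = f x" using assms(1) by simp
next
  fix vs and x assume x: "x \<in> I"
  have "((\<lambda>t. prod_list vs * d (length vs) t) has_derivative (\<lambda>h. prod_list vs * (h * d (Suc (length vs)) x))) (at x)"
    using assms(2)[OF x, of "length vs"] unfolding has_field_derivative_def
    by (auto intro!: derivative_eq_intros simp: mult.commute)
  then show "((\<lambda>t. prod_list vs * d (length vs) t) has_derivative (\<lambda>v. prod_list (v # vs) * d (length (v # vs)) x)) (at x)"
    by (simp add: ac_simps)
qed

lemma smooth_on_real_deriv:
  fixes f :: "real \<Rightarrow> real"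
  assumes "smooth_on I f" "open I"
  shows "\<exists>f'. (\<forall>t\<in>I. (f has_real_derivative f' t) (at t)) \<and> smooth_on I f'"
proof -
  obtain D where D: "\<forall>v. smooth_on I (\<lambda>x. D [v] x)"
      "\<forall>x\<in>I. (f has_derivative (\<lambda>v. D [v] x)) (at x)"
    using smooth_on_hasder[OF assms] by blast
  have lin: "D [v] x = v * D [1] x" if "x \<in> I" for v x
  proof -
    have "linear (\<lambda>v. D [v] x)" using D(2) that has_derivative_linear by blast
    then have "D [v *\<^sub>R 1] x = v *\<^sub>R D [1] x" by (rule linear_scale)
    then show ?thesis by simp
  qed
  have "(f has_real_derivative D [1] t) (at t)" if "t \<in> I" for t
    unfolding has_field_derivative_def
    using D(2) that lin by (metis (no_types, lifting) ext mult.commute)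
  with D(1) show ?thesis by blast
qed



inductive_set alg :: "('a::real_normed_vector \<Rightarrow> real) set \<Rightarrow> 'a set \<Rightarrow> ('a \<Rightarrow> real) set"
  for B N where
  base: "g \<in> B \<Longrightarrow> g \<in> alg B N"
| const: "(\<lambda>x. c) \<in> alg B N"
| add: "f \<in> alg B N \<Longrightarrow> g \<in> alg B N \<Longrightarrow> (\<lambda>x. f x + g x) \<in> alg B N"
| mult: "f \<in> alg B N \<Longrightarrow> g \<in> alg B N \<Longrightarrow> (\<lambda>x. f x * g x) \<in> alg B N"
| comp: "f \<in> alg B N \<Longrightarrow> open I \<Longrightarrow> f ` N \<subseteq> I \<Longrightarrow> smooth_on I \<psi> \<Longrightarrow> (\<lambda>x. \<psi> (f x)) \<in> alg B N"

lemma alg_deriv: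
  assumes hB: "\<And>b. b \<in> B \<Longrightarrow> \<exists>G. (\<forall>v. G v \<in> alg B N) \<and> (\<forall>x\<in>N. (b has_derivative (\<lambda>v. G v x)) (at x))"
  shows "f \<in> alg B N \<Longrightarrow> \<exists>G. (\<forall>v. G v \<in> alg B N) \<and> (\<forall>x\<in>N. (f has_derivative (\<lambda>v. G v x)) (at x))"
proof (induction rule: alg.induct)
  case (base g)
  then show ?case using hB by blast
next
  case (const c)
  show ?case by (rule exI[of _ "\<lambda>v x. 0"]) (auto intro: alg.const)
next
  case (add f g)
  then obtain F G where F: "\<forall>v. F v \<in> alg B N" "\<forall>x\<in>N. (f has_derivative (\<lambda>v. F v x)) (at x)"
    and G: "\<forall>v. G v \<in> alg B N" "\<forall>x\<in>N. (g has_derivative (\<lambda>v. G v x)) (at x)" by blast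
  show ?case
    by (rule exI[of _ "\<lambda>v x. F v x + G v x"]) (use F G in \<open>simp add: alg.add has_derivative_add\<close>)
next
  case (mult f g)
  then obtain F G where F: "\<forall>v. F v \<in> alg B N" "\<forall>x\<in>N. (f has_derivative (\<lambda>v. F v x)) (at x)"
    and G: "\<forall>v. G v \<in> alg B N" "\<forall>x\<in>N. (g has_derivative (\<lambda>v. G v x)) (at x)" by blast
  show ?case
  proof (rule exI[of _ "\<lambda>v x. f x * G v x + F v x * g x"], intro conjI allI ballI)
    fix v show "(\<lambda>x. f x * G v x + F v x * g x) \<in> alg B N"
      using F G mult by (simp add: alg.add alg.mult)
  next
    fix x assume "x \<in> N"
    then show "((\<lambda>x. f x * g x) has_derivative (\<lambda>v. f x * G v x + F v x * g x)) (at x)"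
      using F(2) G(2) \<open>x \<in> N\<close> by (intro has_derivative_mult) auto
  qed
next
  case (comp f I \<psi>)
  then obtain F where F: "\<forall>v. F v \<in> alg B N" "\<forall>x\<in>N. (f has_derivative (\<lambda>v. F v x)) (at x)" by blast
  obtain \<psi>' where \<psi>'0: "\<forall>t\<in>I. (\<psi> has_real_derivative \<psi>' t) (at t)" and \<psi>'2: "smooth_on I \<psi>'"
    using smooth_on_real_deriv[OF \<open>smooth_on I \<psi>\<close> \<open>open I\<close>] by blast
  have \<psi>'1: "\<And>t. t \<in> I \<Longrightarrow> (\<psi> has_real_derivative \<psi>' t) (at t)" using \<psi>'0 by blast
  note \<psi>' = \<psi>'1 \<psi>'2
  show ?case
  proof (rule exI[of _ "\<lambda>v x. \<psi>' (f x) * F v x"], intro conjI allI ballI)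
    fix v show "(\<lambda>x. \<psi>' (f x) * F v x) \<in> alg B N"
      using alg.mult[OF alg.comp[OF \<open>f \<in> alg B N\<close> \<open>open I\<close> \<open>f ` N \<subseteq> I\<close> \<psi>'(2)] F(1)[rule_format, of v]] .
  next
    fix x assume x: "x \<in> N"
    have d\<psi>: "(\<psi> has_derivative (\<lambda>h. \<psi>' (f x) * h)) (at (f x))"
      using \<psi>'(1)[of "f x"] \<open>f ` N \<subseteq> I\<close> x unfolding has_field_derivative_def by auto
    have df: "(f has_derivative (\<lambda>v. F v x)) (at x)" using F(2) x by blast
    from has_derivative_compose[OF df d\<psi>]
    show "((\<lambda>x. \<psi> (f x)) has_derivative (\<lambda>v. \<psi>' (f x) * F v x)) (at x)" by blast
  qed
qed

lemma alg_smooth: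
  assumes hB: "\<And>b. b \<in> B \<Longrightarrow> \<exists>G. (\<forall>v. G v \<in> alg B N) \<and> (\<forall>x\<in>N. (b has_derivative (\<lambda>v. G v x)) (at x))"
    and f: "f \<in> alg B N"
  shows "smooth_on N f"
proof (rule smooth_coinduct[where P="\<lambda>g. g \<in> alg B N"])
  show "f \<in> alg B N" by fact
next
  fix g assume "g \<in> alg B N"
  from alg_deriv[OF hB this] obtain G where
    "\<forall>v. G v \<in> alg B N" "\<forall>x\<in>N. (g has_derivative (\<lambda>v. G v x)) (at x)" by blast
  then show "\<exists>g'. (\<forall>x\<in>N. (g has_derivative g' x) (at x)) \<and> (\<forall>v. (\<lambda>x. g' x v) \<in> alg B N)"
    by (intro exI[of _ "\<lambda>x v. G v x"]) auto
qed



lemma poly_exp_lim: "((\<lambda>s. poly Q s / exp s) \<longlongrightarrow> (0::real)) at_top"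
proof -
  have "((\<lambda>s. \<Sum>i\<le>degree Q. coeff Q i * (s ^ i / exp s)) \<longlongrightarrow> (0::real)) at_top"
    by (intro tendsto_null_sum tendsto_mult_right_zero tendsto_power_div_exp_0)
  then show ?thesis
    by (simp add: poly_altdef sum_divide_distrib)
qed

primrec Pe :: "nat \<Rightarrow> real poly" where
  "Pe 0 = 1"
| "Pe (Suc n) = [:0, 0, 1:] * (Pe n - pderiv (Pe n))"

definition de :: "nat \<Rightarrow> real \<Rightarrow> real" where
  "de n t = (if t \<le> 0 then 0 else poly (Pe n) (1 / t) * exp (- (1 / t)))"

lemma de_pos_deriv:
  assumes "t > 0"
  shows "((\<lambda>t. poly (Pe n) (1 / t) * exp (- (1 / t))) has_real_derivative de (Suc n) t) (at t)"
proof -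
  have "((\<lambda>t. poly (Pe n) (1 / t) * exp (- (1 / t))) has_real_derivative
     poly (pderiv (Pe n)) (1 / t) * (- 1 / t^2) * exp (- (1 / t)) + poly (Pe n) (1 / t) * (exp (- (1 / t)) * (1 / t^2))) (at t)"
    using assms
    by (auto intro!: derivative_eq_intros simp: power2_eq_square field_simps)
  moreover have "poly (pderiv (Pe n)) (1 / t) * (- 1 / t^2) * exp (- (1 / t)) + poly (Pe n) (1 / t) * (exp (- (1 / t)) * (1 / t^2))
      = de (Suc n) t"
    using assms by (simp add: de_def algebra_simps power2_eq_square)
  ultimately show ?thesis by simp
qed

lemma de_deriv: "(de n has_real_derivative de (Suc n) t) (at t)"
proof (cases "t > 0")
  case True
  show ?thesis
    by (rule has_field_derivative_transform_within_open[OF de_pos_deriv[OF True] open_greaterThan[of 0]])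
       (use True in \<open>auto simp: de_def\<close>)
next
  case False
  show ?thesis
  proof (cases "t < 0")
    case True
    have "((\<lambda>_. 0) has_real_derivative 0) (at t)" by simp
    then have "(de n has_real_derivative 0) (at t)"
      by (rule has_field_derivative_transform_within_open[OF _ open_lessThan[of 0]]) (use True in \<open>auto simp: de_def\<close>)
    then show ?thesis using True by (simp add: de_def)
  next
    case False
    with \<open>\<not> t > 0\<close> have t0: "t = 0" by simp
    have "((\<lambda>y. (de n y - de n 0) / (y - 0)) \<longlongrightarrow> 0) (at 0)"
    proof (rule filterlim_split_at)
      have "eventually (\<lambda>y. 0 = (de n y - de n 0) / (y - 0)) (at_left (0::real))"
        unfolding eventually_at_left_field by (auto intro!: exI[of _ "-1"] simp: de_def)
      then show "((\<lambda>y. (de n y - de n 0) / (y - 0)) \<longlongrightarrow> 0) (at_left 0)"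
        by (rule Lim_transform_eventually[OF tendsto_const])
    next
      have lim: "((\<lambda>s. poly ([:0, 1:] * Pe n) s / exp s) \<longlongrightarrow> 0) at_top" by (rule poly_exp_lim)
      have "eventually (\<lambda>s. poly ([:0, 1:] * Pe n) s / exp s = (de n (inverse s) - de n 0) / (inverse s - 0)) at_top"
        using eventually_gt_at_top[of 0]
        by eventually_elim (simp add: de_def field_simps exp_minus)
      with lim have "((\<lambda>s. (de n (inverse s) - de n 0) / (inverse s - 0)) \<longlongrightarrow> 0) at_top"
        by (rule Lim_transform_eventually)
      then show "((\<lambda>y. (de n y - de n 0) / (y - 0)) \<longlongrightarrow> 0) (at_right 0)"
        unfolding filterlim_at_right_to_top .
    qed
    then have "(de n has_real_derivative 0) (at 0)"
      by (simp add: has_field_derivative_iff)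
    moreover have "de (Suc n) 0 = 0" by (simp add: de_def)
    ultimately show ?thesis using t0 by simp
  qed
qed

lemma smooth_de: "smooth_on UNIV (de 0)"
  by (rule smooth_on_real_fam[where d=de]) (auto intro: de_deriv)



lemma smooth_inverse: "smooth_on {0<..} (inverse :: real \<Rightarrow> real)"
proof (rule smooth_on_real_fam[where d="\<lambda>n t. (-1)^n * fact n / t^(Suc n)"])
  fix t :: real assume "t \<in> {0<..}"
  then show "(-1)^0 * fact 0 / t^(Suc 0) = inverse t" by (simp add: field_simps)
next
  fix n and t :: real assume t: "t \<in> {0<..}"
  have "((\<lambda>t. (-1)^n * fact n / t^(Suc n)) has_real_derivative
        (-1)^n * fact n * (- (real (Suc n) * t^n) / (t^(Suc n))^2)) (at t)"
    using t apply (auto intro!: derivative_eq_intros simp del: power_Suc)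
    by (simp add: power2_eq_square)
  moreover have "(-1)^n * fact n * (- (real (Suc n) * t^n) / (t^(Suc n))^2) = (-1)^(Suc n) * fact (Suc n) / t^(Suc (Suc n))"
    using t by (simp add: field_simps power2_eq_square power_Suc fact_Suc)
  ultimately show "((\<lambda>t. (-1)^n * fact n / t^(Suc n)) has_real_derivative (-1)^(Suc n) * fact (Suc n) / t^(Suc (Suc n))) (at t)"
    by simp
qed

lemma de0_nonneg: "de 0 t \<ge> 0" by (simp add: de_def)
lemma de0_pos: "t > 0 \<Longrightarrow> de 0 t > 0" by (simp add: de_def)
lemma de0_zero: "t \<le> 0 \<Longrightarrow> de 0 t = 0" by (simp add: de_def)

definition chi1 :: "real \<Rightarrow> real" where
  "chi1 t = de 0 t * inverse (de 0 t + de 0 (1 + (-1) * t))"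

lemma chi1_smooth: "smooth_on UNIV chi1"
proof -
  let ?B = "{\<lambda>t::real. t}"
  have hB: "\<exists>G. (\<forall>v. G v \<in> alg ?B UNIV) \<and> (\<forall>x\<in>UNIV. (b has_derivative (\<lambda>v. G v x)) (at x))"
    if "b \<in> ?B" for b
    using that by (intro exI[of _ "\<lambda>v x. v"]) (auto intro: alg.const)
  have id: "(\<lambda>t. t) \<in> alg ?B UNIV" by (rule alg.base) simp
  have f1: "(\<lambda>t. de 0 t) \<in> alg ?B UNIV"
    using alg.comp[OF id open_UNIV _ smooth_de] by simp
  have lin: "(\<lambda>t. 1 + (-1) * t) \<in> alg ?B UNIV"
    by (intro alg.add alg.mult alg.const id)
  have f2: "(\<lambda>t. de 0 (1 + (-1) * t)) \<in> alg ?B UNIV"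
    using alg.comp[OF lin open_UNIV _ smooth_de] by simp
  have den: "(\<lambda>t. de 0 t + de 0 (1 + (-1) * t)) \<in> alg ?B UNIV" by (rule alg.add[OF f1 f2])
  have pos: "(\<lambda>t. de 0 t + de 0 (1 + (-1) * t)) ` UNIV \<subseteq> {0<..}"
  proof clarsimp
    fix t :: real
    show "0 < de 0 t + de 0 (1 - t)"
      using de0_pos[of t] de0_pos[of "1 - t"] de0_nonneg[of t] de0_nonneg[of "1 - t"]
      by (cases "t > 0") auto
  qed
  have "chi1 \<in> alg ?B UNIV"
    unfolding chi1_def by (rule alg.mult[OF f1 alg.comp[OF den open_greaterThan pos smooth_inverse]])
  from alg_smooth[where B="?B" and N=UNIV, OF hB this] show ?thesis .
qed

lemma chi1_0: "t \<le> 0 \<Longrightarrow> chi1 t = 0" by (simp add: chi1_def de0_zero)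
lemma chi1_1: "t \<ge> 1 \<Longrightarrow> chi1 t = 1"
  using de0_pos[of t] by (simp add: chi1_def de0_zero)

lemma chi1_props:
  obtains chi1' M where "\<And>t. (chi1 has_real_derivative chi1' t) (at t)" "\<And>t. \<bar>chi1' t\<bar> \<le> M" "M > 0"
proof -
  obtain c' where c'0: "\<forall>t\<in>UNIV. (chi1 has_real_derivative c' t) (at t)" and c'2: "smooth_on UNIV c'"
    using smooth_on_real_deriv[OF chi1_smooth open_UNIV] by blast
  have c'1: "\<And>t. (chi1 has_real_derivative c' t) (at t)" using c'0 by blast
  note c' = c'1 c'2
  obtain c'' where c''0: "\<forall>t\<in>UNIV. (c' has_real_derivative c'' t) (at t)"
    using smooth_on_real_deriv[OF c'(2) open_UNIV] by blast
  have c'': "\<And>t. (c' has_real_derivative c'' t) (at t)" using c''0 by blast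
  have cont: "continuous_on {0..1} c'"
    by (intro continuous_at_imp_continuous_on ballI DERIV_isCont[OF c''])
  have "compact (c' ` {0..1})" by (rule compact_continuous_image[OF cont compact_Icc])
  then have "bounded (c' ` {0..1})" by (rule compact_imp_bounded)
  then obtain M0 where "\<forall>x\<in>c' ` {0..1}. norm x \<le> M0"
    unfolding bounded_iff by blast
  then have M0: "\<And>t. t \<in> {0..1} \<Longrightarrow> \<bar>c' t\<bar> \<le> M0" by auto
  have out: "c' t = 0" if "t < 0 \<or> t > 1" for t
  proof -
    have "(chi1 has_real_derivative 0) (at t)"
    proof (cases "t < 0")
      case True
      show ?thesis
        by (rule has_field_derivative_transform_within_open[OF DERIV_const[of 0] open_lessThan[of 0]])
          (use True in \<open>auto simp: chi1_0\<close>)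
    next
      case False
      with that have "t > 1" by simp
      show ?thesis
        by (rule has_field_derivative_transform_within_open[OF DERIV_const[of 1] open_greaterThan[of 1]])
          (use \<open>t > 1\<close> in \<open>auto simp: chi1_1\<close>)
    qed
    then show ?thesis using c'(1)[of t] DERIV_unique by blast
  qed
  have "\<bar>c' t\<bar> \<le> max M0 1" for t
    using M0[of t] out[of t] by (cases "t < 0 \<or> t > 1") auto
  then show ?thesis by (rule that[OF c'(1)]) simp
qed



definition uu :: "nat \<Rightarrow> nat \<Rightarrow> nat \<Rightarrow> complex \<times> complex \<Rightarrow> complex" where
  "uu p q k z = (fst z ^ p * snd z ^ q) ^ k"

lemma du:
  assumes "fst z \<noteq> 0" "snd z \<noteq> 0"
  shows "(uu p q k has_derivative (\<lambda>v. uu p q k z * (of_nat k * (of_nat p * fst v / fst z + of_nat q * snd v / snd z)))) (at z)"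
  unfolding uu_def
  apply (rule derivative_eq_intros refl)+
  apply (rule ext)
  using assms apply (simp add: field_simps)
  by (cases p; cases q; cases k) (simp_all add: power_mult_distrib algebra_simps)


lemma tau_eq:
  assumes "fst z \<noteq> 0" "snd z \<noteq> 0"
  shows "tau p q k \<mu> z v = \<mu> * (of_nat p * fst v / fst z + of_nat q * snd v / snd z)
     + (of_nat p * fst v / fst z + of_nat q * snd v / snd z) / uu p q k z - of_nat p * fst v / fst z"
  using assms unfolding tau_def uu_def Let_def
  apply (simp add: field_simps)
  by (cases p; cases q; cases k) (simp_all add: power_mult_distrib algebra_simps)

lemma dlnx:
  assumes "fst z \<noteq> 0"
  shows "((\<lambda>z. ln (norm (fst z))) has_derivative (\<lambda>v. Re (fst v / fst z))) (at z)"
proof -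
  have n: "((\<lambda>x. cmod (fst x)) has_derivative (\<lambda>za. fst za \<bullet> sgn (fst z))) (at z)"
    using has_derivative_compose[OF has_derivative_fst[OF has_derivative_ident] has_derivative_norm[OF assms]] by simp
  have a: "((\<lambda>z. ln (norm (fst z))) has_derivative (\<lambda>v. fst v \<bullet> sgn (fst z) / cmod (fst z))) (at z)"
    using assms n
    by (auto intro!: derivative_eq_intros simp: field_simps)
  have b: "(\<lambda>v. fst v \<bullet> sgn (fst z) / cmod (fst z)) = (\<lambda>v. Re (fst v / fst z))"
  proof -
    have "cmod (fst z) * cmod (fst z) = Im (fst z) * Im (fst z) + Re (fst z) * Re (fst z)"
      using cmod_power2[of "fst z"] by (simp add: power2_eq_square)
    then show ?thesis
      using assms by (auto simp: inner_complex_def Re_divide power2_eq_square field_simps sgn_div_norm)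
  qed
  show ?thesis using a unfolding b .
qed

definition hL :: "nat \<Rightarrow> nat \<Rightarrow> nat \<Rightarrow> complex \<Rightarrow> (complex \<Rightarrow> complex) \<Rightarrow> complex \<times> complex \<Rightarrow> real" where
  "hL p q k \<mu> L z = Re ((\<mu> / of_nat k) * L (uu p q k z)) - Re ((1 / of_nat k) * inverse (uu p q k z))
     - real p * ln (norm (fst z))"

lemma uu_nz: "fst z \<noteq> 0 \<Longrightarrow> snd z \<noteq> 0 \<Longrightarrow> uu p q k z \<noteq> 0"
  by (simp add: uu_def)

lemma dhL:
  assumes x: "fst z \<noteq> 0" and y: "snd z \<noteq> 0" and k: "k > 0"
    and dL: "(L has_field_derivative inverse (uu p q k z)) (at (uu p q k z))"
  shows "(hL p q k \<mu> L has_derivative re_tau p q k \<mu> z) (at z)"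
proof -
  define u where "u = uu p q k z"
  define K where "K = (\<lambda>v. of_nat p * fst v / fst z + of_nat q * snd v / snd z)"
  have u0: "u \<noteq> 0" unfolding u_def using uu_nz x y by blast
  have dU: "(uu p q k has_derivative (\<lambda>v. u * (of_nat k * K v))) (at z)"
    unfolding u_def K_def by (rule du[OF x y])
  have dLu: "((\<lambda>z. L (uu p q k z)) has_derivative (\<lambda>v. inverse u * (u * (of_nat k * K v)))) (at z)"
    using has_derivative_compose[OF dU dL[unfolded has_field_derivative_def]] unfolding u_def .
  have dI: "((\<lambda>z. inverse (uu p q k z)) has_derivative (\<lambda>v. - (inverse u * (u * (of_nat k * K v)) * inverse u))) (at z)"
    using Deriv.has_derivative_inverse[OF _ dU] u0 unfolding u_def by simp
  have d: "(hL p q k \<mu> L has_derivative (\<lambda>v. Re ((\<mu> / of_nat k) * (inverse u * (u * (of_nat k * K v))))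
       - Re ((1 / of_nat k) * (- (inverse u * (u * (of_nat k * K v)) * inverse u))) - real p * Re (fst v / fst z))) (at z)"
    unfolding hL_def
    by (intro has_derivative_diff has_derivative_Re has_derivative_mult_right dLu dI dlnx x)
  have eq: "(\<lambda>v. Re ((\<mu> / of_nat k) * (inverse u * (u * (of_nat k * K v))))
       - Re ((1 / of_nat k) * (- (inverse u * (u * (of_nat k * K v)) * inverse u))) - real p * Re (fst v / fst z))
      = re_tau p q k \<mu> z"
  proof
    fix v
    have "re_tau p q k \<mu> z v = Re (\<mu> * K v + K v / u - of_nat p * fst v / fst z)"
      unfolding re_tau_def tau_eq[OF x y] K_def u_def ..
    also have "\<dots> = Re ((\<mu> / of_nat k) * (inverse u * (u * (of_nat k * K v))))
       - Re ((1 / of_nat k) * (- (inverse u * (u * (of_nat k * K v)) * inverse u))) - real p * Re (fst v / fst z)"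
    proof -
      have c: "(\<mu> / of_nat k) * (inverse u * (u * (of_nat k * K v))) - (1 / of_nat k) * (- (inverse u * (u * (of_nat k * K v)) * inverse u))
          = \<mu> * K v + K v / u"
        using u0 k by (simp add: field_simps)
      have r: "of_nat p * fst v / fst z = of_nat p * (fst v / fst z)" by simp
      have r2: "Re (of_nat p * (fst v / fst z)) = real p * Re (fst v / fst z)"
        by (simp only: times_complex.sel complex_Re_of_nat complex_Im_of_nat)
      have "Re (\<mu> * K v + K v / u - of_nat p * fst v / fst z) = Re (\<mu> * K v + K v / u) - real p * Re (fst v / fst z)"
        unfolding r minus_complex.sel r2 ..
      also have "Re (\<mu> * K v + K v / u) = Re ((\<mu> / of_nat k) * (inverse u * (u * (of_nat k * K v))))
          - Re ((1 / of_nat k) * (- (inverse u * (u * (of_nat k * K v)) * inverse u)))"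
        unfolding c[symmetric] by (simp only: minus_complex.sel)
      finally show ?thesis .
    qed
    finally show "Re ((\<mu> / of_nat k) * (inverse u * (u * (of_nat k * K v))))
       - Re ((1 / of_nat k) * (- (inverse u * (u * (of_nat k * K v)) * inverse u))) - real p * Re (fst v / fst z)
      = re_tau p q k \<mu> z v" ..
  qed
  show ?thesis using d unfolding eq .
qed



lemma dlny:
  assumes "snd z \<noteq> 0"
  shows "((\<lambda>z. ln (norm (snd z))) has_derivative (\<lambda>v. Re (snd v / snd z))) (at z)"
proof -
  have n: "((\<lambda>x. cmod (snd x)) has_derivative (\<lambda>za. snd za \<bullet> sgn (snd z))) (at z)"
    using has_derivative_compose[OF has_derivative_snd[OF has_derivative_ident] has_derivative_norm[OF assms]] by simp
  have a: "((\<lambda>z. ln (norm (snd z))) has_derivative (\<lambda>v. snd v \<bullet> sgn (snd z) / cmod (snd z))) (at z)"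
    using assms n
    by (auto intro!: derivative_eq_intros simp: field_simps)
  have b: "(\<lambda>v. snd v \<bullet> sgn (snd z) / cmod (snd z)) = (\<lambda>v. Re (snd v / snd z))"
  proof -
    have "cmod (snd z) * cmod (snd z) = Im (snd z) * Im (snd z) + Re (snd z) * Re (snd z)"
      using cmod_power2[of "snd z"] by (simp add: power2_eq_square)
    then show ?thesis
      using assms by (auto simp: inner_complex_def Re_divide power2_eq_square field_simps sgn_div_norm)
  qed
  show ?thesis using a unfolding b .
qed

lemma dLu:
  assumes x: "fst z \<noteq> 0" and y: "snd z \<noteq> 0"
    and dL: "(L has_field_derivative inverse (uu p q k z)) (at (uu p q k z))"
  shows "((\<lambda>z. L (uu p q k z)) has_derivative (\<lambda>v. of_nat k * (of_nat p * fst v * inverse (fst z) + of_nat q * snd v * inverse (snd z)))) (at z)"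
proof -
  have u0: "uu p q k z \<noteq> 0" using uu_nz x y by blast
  have "((\<lambda>z. L (uu p q k z)) has_derivative (\<lambda>v. inverse (uu p q k z) * (uu p q k z * (of_nat k * (of_nat p * fst v / fst z + of_nat q * snd v / snd z))))) (at z)"
    using has_derivative_compose[OF du[OF x y] dL[unfolded has_field_derivative_def]] .
  moreover have "(\<lambda>v. inverse (uu p q k z) * (uu p q k z * (of_nat k * (of_nat p * fst v / fst z + of_nat q * snd v / snd z))))
     = (\<lambda>v. of_nat k * (of_nat p * fst v * inverse (fst z) + of_nat q * snd v * inverse (snd z)))"
    using u0 by (auto simp: divide_inverse)
  ultimately show ?thesis by (simp only:)
qed

definition BL :: "nat \<Rightarrow> nat \<Rightarrow> nat \<Rightarrow> (complex \<Rightarrow> complex) \<Rightarrow> (complex \<times> complex \<Rightarrow> real) set" where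
  "BL p q k L = {\<lambda>z. Re (fst z), \<lambda>z. Im (fst z), \<lambda>z. Re (snd z), \<lambda>z. Im (snd z),
     \<lambda>z. Re (inverse (fst z)), \<lambda>z. Im (inverse (fst z)), \<lambda>z. Re (inverse (snd z)), \<lambda>z. Im (inverse (snd z)),
     \<lambda>z. ln (norm (fst z)), \<lambda>z. ln (norm (snd z)), \<lambda>z. Re (L (uu p q k z)), \<lambda>z. Im (L (uu p q k z))}"

definition cx :: "(complex \<times> complex \<Rightarrow> real) set \<Rightarrow> (complex \<times> complex) set \<Rightarrow> (complex \<times> complex \<Rightarrow> complex) \<Rightarrow> bool" where
  "cx B N f \<longleftrightarrow> (\<lambda>z. Re (f z)) \<in> alg B N \<and> (\<lambda>z. Im (f z)) \<in> alg B N"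

lemma alg_neg: "f \<in> alg B N \<Longrightarrow> (\<lambda>z. - f z) \<in> alg B N"
  using alg.mult[OF alg.const[of "-1"], of f] by simp

lemma alg_diff: "f \<in> alg B N \<Longrightarrow> g \<in> alg B N \<Longrightarrow> (\<lambda>z. f z - g z) \<in> alg B N"
  using alg.add[OF _ alg_neg] by (simp only: diff_conv_add_uminus)

lemma cx_const: "cx B N (\<lambda>z. c)"
  unfolding cx_def by (auto intro: alg.const)

lemma cx_add: "cx B N f \<Longrightarrow> cx B N g \<Longrightarrow> cx B N (\<lambda>z. f z + g z)"
  unfolding cx_def by (auto intro: alg.add)

lemma cx_mult: "cx B N f \<Longrightarrow> cx B N g \<Longrightarrow> cx B N (\<lambda>z. f z * g z)"
  unfolding cx_def by (auto intro!: alg.add alg.mult alg_diff)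

lemma cx_neg: "cx B N f \<Longrightarrow> cx B N (\<lambda>z. - f z)"
  unfolding cx_def by (auto intro: alg_neg)

lemma cx_power: "cx B N f \<Longrightarrow> cx B N (\<lambda>z. f z ^ n)"
  by (induction n) (auto intro: cx_const cx_mult)

lemma cx_base:
  "cx (BL p q k L) N fst" "cx (BL p q k L) N snd"
  "cx (BL p q k L) N (\<lambda>z. inverse (fst z))" "cx (BL p q k L) N (\<lambda>z. inverse (snd z))"
  "cx (BL p q k L) N (\<lambda>z. L (uu p q k z))"
  unfolding cx_def by (auto intro!: alg.base simp: BL_def)

lemma alg_lnx: "(\<lambda>z. ln (norm (fst z))) \<in> alg (BL p q k L) N"
  and alg_lny: "(\<lambda>z. ln (norm (snd z))) \<in> alg (BL p q k L) N"
  by (auto intro!: alg.base simp: BL_def)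

lemma exG: "(\<And>v. G v \<in> A) \<Longrightarrow> (\<And>x. x \<in> N \<Longrightarrow> (b has_derivative (\<lambda>v. G v x)) (at x)) \<Longrightarrow>
  \<exists>G. (\<forall>v. G v \<in> A) \<and> (\<forall>x\<in>N. (b has_derivative (\<lambda>v. G v x)) (at x))"
  by blast

lemma hB_L:
  assumes N: "\<And>z. z \<in> N \<Longrightarrow> fst z \<noteq> 0 \<and> snd z \<noteq> 0 \<and> (L has_field_derivative inverse (uu p q k z)) (at (uu p q k z))"
    and b: "b \<in> BL p q k L"
  shows "\<exists>G. (\<forall>v. G v \<in> alg (BL p q k L) N) \<and> (\<forall>x\<in>N. (b has_derivative (\<lambda>v. G v x)) (at x))"
proof -
  let ?B = "BL p q k L"
  have cxk: "cx ?B N (\<lambda>z. c * f z)" if "cx ?B N f" for c f using cx_mult[OF cx_const that] .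
  have fst': "((\<lambda>z. fst z) has_derivative (\<lambda>v. fst v)) (at z)" for z :: "complex \<times> complex"
    by (rule has_derivative_fst[OF has_derivative_ident])
  have snd': "((\<lambda>z. snd z) has_derivative (\<lambda>v. snd v)) (at z)" for z :: "complex \<times> complex"
    by (rule has_derivative_snd[OF has_derivative_ident])
  have ix: "((\<lambda>z. inverse (fst z)) has_derivative (\<lambda>v. - (inverse (fst x) * fst v * inverse (fst x)))) (at x)" if "x \<in> N" for x
    using Deriv.has_derivative_inverse[OF _ fst'] N[OF that] by blast
  have iy: "((\<lambda>z. inverse (snd z)) has_derivative (\<lambda>v. - (inverse (snd x) * snd v * inverse (snd x)))) (at x)" if "x \<in> N" for x
    using Deriv.has_derivative_inverse[OF _ snd'] N[OF that] by blast
  have cix: "cx ?B N (\<lambda>z. - (inverse (fst z) * c * inverse (fst z)))" for c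
    by (intro cx_neg cx_mult cx_base cx_const)
  have ciy: "cx ?B N (\<lambda>z. - (inverse (snd z) * c * inverse (snd z)))" for c
    by (intro cx_neg cx_mult cx_base cx_const)
  have dlx: "((\<lambda>z. ln (norm (fst z))) has_derivative (\<lambda>v. Re (fst v * inverse (fst x)))) (at x)" if "x \<in> N" for x
    using dlnx[of x] N[OF that] by (simp add: divide_inverse)
  have dly: "((\<lambda>z. ln (norm (snd z))) has_derivative (\<lambda>v. Re (snd v * inverse (snd x)))) (at x)" if "x \<in> N" for x
    using dlny[of x] N[OF that] by (simp add: divide_inverse)
  have clx: "cx ?B N (\<lambda>z. c * inverse (fst z))" for c by (intro cx_mult cx_base cx_const)
  have cly: "cx ?B N (\<lambda>z. c * inverse (snd z))" for c by (intro cx_mult cx_base cx_const)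
  have dl: "((\<lambda>z. L (uu p q k z)) has_derivative (\<lambda>v. of_nat k * (of_nat p * fst v * inverse (fst x) + of_nat q * snd v * inverse (snd x)))) (at x)"
    if "x \<in> N" for x
    using dLu[of x L p q k] N[OF that] by blast
  have cl: "cx ?B N (\<lambda>z. of_nat k * (of_nat p * fst v * inverse (fst z) + of_nat q * snd v * inverse (snd z)))" for v
    by (intro cx_mult cx_add cx_base cx_const)
  from b consider
      "b = (\<lambda>z. Re (fst z))" | "b = (\<lambda>z. Im (fst z))" | "b = (\<lambda>z. Re (snd z))" | "b = (\<lambda>z. Im (snd z))"
    | "b = (\<lambda>z. Re (inverse (fst z)))" | "b = (\<lambda>z. Im (inverse (fst z)))"
    | "b = (\<lambda>z. Re (inverse (snd z)))" | "b = (\<lambda>z. Im (inverse (snd z)))"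
    | "b = (\<lambda>z. ln (norm (fst z)))" | "b = (\<lambda>z. ln (norm (snd z)))"
    | "b = (\<lambda>z. Re (L (uu p q k z)))" | "b = (\<lambda>z. Im (L (uu p q k z)))"
    unfolding BL_def by blast
  then show ?thesis
  proof cases
    case 1
    show ?thesis unfolding 1
    proof (rule exG[where G="\<lambda>v z. Re (fst v)"])
      show "(\<lambda>z. Re (fst v)) \<in> alg ?B N" for v by (rule alg.const)
      show "((\<lambda>z. Re (fst z)) has_derivative (\<lambda>v. Re (fst v))) (at x)" if "x \<in> N" for x using has_derivative_Re[OF fst'] by simp
    qed
  next
    case 2
    show ?thesis unfolding 2
    proof (rule exG[where G="\<lambda>v z. Im (fst v)"])
      show "(\<lambda>z. Im (fst v)) \<in> alg ?B N" for v by (rule alg.const)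
      show "((\<lambda>z. Im (fst z)) has_derivative (\<lambda>v. Im (fst v))) (at x)" if "x \<in> N" for x using has_derivative_Im[OF fst'] by simp
    qed
  next
    case 3
    show ?thesis unfolding 3
    proof (rule exG[where G="\<lambda>v z. Re (snd v)"])
      show "(\<lambda>z. Re (snd v)) \<in> alg ?B N" for v by (rule alg.const)
      show "((\<lambda>z. Re (snd z)) has_derivative (\<lambda>v. Re (snd v))) (at x)" if "x \<in> N" for x using has_derivative_Re[OF snd'] by simp
    qed
  next
    case 4
    show ?thesis unfolding 4
    proof (rule exG[where G="\<lambda>v z. Im (snd v)"])
      show "(\<lambda>z. Im (snd v)) \<in> alg ?B N" for v by (rule alg.const)
      show "((\<lambda>z. Im (snd z)) has_derivative (\<lambda>v. Im (snd v))) (at x)" if "x \<in> N" for x using has_derivative_Im[OF snd'] by simp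
    qed
  next
    case 5
    show ?thesis unfolding 5
    proof (rule exG[where G="\<lambda>v z. Re (- (inverse (fst z) * fst v * inverse (fst z)))"])
      show "(\<lambda>z. Re (- (inverse (fst z) * fst v * inverse (fst z)))) \<in> alg ?B N" for v using cix[of "fst v", unfolded cx_def, THEN conjunct1] by simp
      show "((\<lambda>z. Re (inverse (fst z))) has_derivative (\<lambda>v. Re (- (inverse (fst x) * fst v * inverse (fst x))))) (at x)" if "x \<in> N" for x using has_derivative_Re[OF ix[OF that]] by simp
    qed
  next
    case 6
    show ?thesis unfolding 6
    proof (rule exG[where G="\<lambda>v z. Im (- (inverse (fst z) * fst v * inverse (fst z)))"])
      show "(\<lambda>z. Im (- (inverse (fst z) * fst v * inverse (fst z)))) \<in> alg ?B N" for v using cix[of "fst v", unfolded cx_def, THEN conjunct2] by simp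
      show "((\<lambda>z. Im (inverse (fst z))) has_derivative (\<lambda>v. Im (- (inverse (fst x) * fst v * inverse (fst x))))) (at x)" if "x \<in> N" for x using has_derivative_Im[OF ix[OF that]] by simp
    qed
  next
    case 7
    show ?thesis unfolding 7
    proof (rule exG[where G="\<lambda>v z. Re (- (inverse (snd z) * snd v * inverse (snd z)))"])
      show "(\<lambda>z. Re (- (inverse (snd z) * snd v * inverse (snd z)))) \<in> alg ?B N" for v using ciy[of "snd v", unfolded cx_def, THEN conjunct1] by simp
      show "((\<lambda>z. Re (inverse (snd z))) has_derivative (\<lambda>v. Re (- (inverse (snd x) * snd v * inverse (snd x))))) (at x)" if "x \<in> N" for x using has_derivative_Re[OF iy[OF that]] by simp
    qed
  next
    case 8
    show ?thesis unfolding 8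
    proof (rule exG[where G="\<lambda>v z. Im (- (inverse (snd z) * snd v * inverse (snd z)))"])
      show "(\<lambda>z. Im (- (inverse (snd z) * snd v * inverse (snd z)))) \<in> alg ?B N" for v using ciy[of "snd v", unfolded cx_def, THEN conjunct2] by simp
      show "((\<lambda>z. Im (inverse (snd z))) has_derivative (\<lambda>v. Im (- (inverse (snd x) * snd v * inverse (snd x))))) (at x)" if "x \<in> N" for x using has_derivative_Im[OF iy[OF that]] by simp
    qed
  next
    case 9
    show ?thesis unfolding 9
    proof (rule exG[where G="\<lambda>v z. Re (fst v * inverse (fst z))"])
      show "(\<lambda>z. Re (fst v * inverse (fst z))) \<in> alg ?B N" for v using clx[of "fst v", unfolded cx_def, THEN conjunct1] by simp
      show "((\<lambda>z. ln (norm (fst z))) has_derivative (\<lambda>v. Re (fst v * inverse (fst x)))) (at x)" if "x \<in> N" for x using dlx[OF that] by simp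
    qed
  next
    case 10
    show ?thesis unfolding 10
    proof (rule exG[where G="\<lambda>v z. Re (snd v * inverse (snd z))"])
      show "(\<lambda>z. Re (snd v * inverse (snd z))) \<in> alg ?B N" for v using cly[of "snd v", unfolded cx_def, THEN conjunct1] by simp
      show "((\<lambda>z. ln (norm (snd z))) has_derivative (\<lambda>v. Re (snd v * inverse (snd x)))) (at x)" if "x \<in> N" for x using dly[OF that] by simp
    qed
  next
    case 11
    show ?thesis unfolding 11
    proof (rule exG[where G="\<lambda>v z. Re (of_nat k * (of_nat p * fst v * inverse (fst z) + of_nat q * snd v * inverse (snd z)))"])
      show "(\<lambda>z. Re (of_nat k * (of_nat p * fst v * inverse (fst z) + of_nat q * snd v * inverse (snd z)))) \<in> alg ?B N" for v using cl[of v, unfolded cx_def, THEN conjunct1] by simp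
      show "((\<lambda>z. Re (L (uu p q k z))) has_derivative (\<lambda>v. Re (of_nat k * (of_nat p * fst v * inverse (fst x) + of_nat q * snd v * inverse (snd x))))) (at x)" if "x \<in> N" for x using has_derivative_Re[OF dl[OF that]] by simp
    qed
  next
    case 12
    show ?thesis unfolding 12
    proof (rule exG[where G="\<lambda>v z. Im (of_nat k * (of_nat p * fst v * inverse (fst z) + of_nat q * snd v * inverse (snd z)))"])
      show "(\<lambda>z. Im (of_nat k * (of_nat p * fst v * inverse (fst z) + of_nat q * snd v * inverse (snd z)))) \<in> alg ?B N" for v using cl[of v, unfolded cx_def, THEN conjunct2] by simp
      show "((\<lambda>z. Im (L (uu p q k z))) has_derivative (\<lambda>v. Im (of_nat k * (of_nat p * fst v * inverse (fst x) + of_nat q * snd v * inverse (snd x))))) (at x)" if "x \<in> N" for x using has_derivative_Im[OF dl[OF that]] by simp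
    qed
  qed
qed

lemma alg_hL: "hL p q k \<mu> L \<in> alg (BL p q k L) N"
proof -
  let ?B = "BL p q k L"
  have c1: "cx ?B N (\<lambda>z. (\<mu> / of_nat k) * L (uu p q k z))"
    by (intro cx_mult cx_const cx_base)
  have inv: "(\<lambda>z. (1 / of_nat k) * inverse (uu p q k z)) = (\<lambda>z. (1 / of_nat k) * (inverse (fst z) ^ p * inverse (snd z) ^ q) ^ k)"
    by (simp add: uu_def power_inverse inverse_mult_distrib power_mult_distrib)
  have c2: "cx ?B N (\<lambda>z. (1 / of_nat k) * inverse (uu p q k z))"
    unfolding inv by (intro cx_mult cx_const cx_power cx_base)
  have "(\<lambda>z. Re ((\<mu> / of_nat k) * L (uu p q k z)) - Re ((1 / of_nat k) * inverse (uu p q k z)) - real p * ln (norm (fst z))) \<in> alg ?B N"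
    using c1 c2 unfolding cx_def by (intro alg_diff alg.mult alg.const alg_lnx) auto
  then show ?thesis unfolding hL_def[abs_def] .
qed

lemma alg_hLchi: "(\<lambda>z. hL p q k \<mu> L z + c * chi1 (hL p q k \<mu> L z * d)) \<in> alg (BL p q k L) N"
  by (intro alg.add alg.mult alg.const alg_hL alg.comp[OF alg.mult[OF alg_hL alg.const] open_UNIV subset_UNIV chi1_smooth])

lemma smooth_hL:
  assumes N: "\<And>z. z \<in> N \<Longrightarrow> fst z \<noteq> 0 \<and> snd z \<noteq> 0 \<and> (L has_field_derivative inverse (uu p q k z)) (at (uu p q k z))"
  shows "smooth_on N (hL p q k \<mu> L)" "smooth_on N (\<lambda>z. hL p q k \<mu> L z + c * chi1 (hL p q k \<mu> L z * d))"
proof -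
  have hB: "\<exists>G. (\<forall>v. G v \<in> alg (BL p q k L) N) \<and> (\<forall>x\<in>N. (b has_derivative (\<lambda>v. G v x)) (at x))"
    if "b \<in> BL p q k L" for b using hB_L[OF N that] .
  show "smooth_on N (hL p q k \<mu> L)" by (rule alg_smooth[OF hB alg_hL])
  show "smooth_on N (\<lambda>z. hL p q k \<mu> L z + c * chi1 (hL p q k \<mu> L z * d))" by (rule alg_smooth[OF hB alg_hLchi])
qed



definition Ln2 :: "complex \<Rightarrow> complex" where "Ln2 u = Ln (- u) + \<i> * of_real pi"

lemma Ln_deriv: "Im u \<noteq> 0 \<or> Re u > 0 \<Longrightarrow> (Ln has_field_derivative inverse u) (at u)"
  by (rule has_field_derivative_Ln) (auto simp: complex_nonpos_Reals_iff)

lemma Ln2_deriv: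
  assumes "Re u < 0"
  shows "(Ln2 has_field_derivative inverse u) (at u)"
proof -
  have h: "- u \<notin> \<real>\<^sub>\<le>\<^sub>0" using assms by (auto simp: complex_nonpos_Reals_iff)
  have "((\<lambda>u. Ln (- u)) has_field_derivative inverse (- u) * (- 1)) (at u)"
  proof -
    have dm: "((\<lambda>u. - u) has_field_derivative - 1) (at u)" by (auto intro!: derivative_eq_intros)
    show ?thesis using DERIV_chain2[OF has_field_derivative_Ln[OF h] dm] by simp
  qed
  then have "((\<lambda>u. Ln (- u) + \<i> * of_real pi) has_field_derivative inverse (- u) * (- 1) + 0) (at u)"
    by (intro DERIV_add DERIV_const)
  then show ?thesis unfolding Ln2_def[abs_def] by simp
qed

lemma Ln2_lower: "Im u < 0 \<Longrightarrow> Ln2 u = Ln u + 2 * of_real pi * \<i>"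
proof -
  assume a: "Im u < 0"
  then have "u \<noteq> 0" by auto
  with a have "Ln (- u) = Ln u + \<i> * of_real pi" using Ln_minus[of u] by auto
  then show ?thesis by (simp add: Ln2_def algebra_simps)
qed

lemma Ln2_upper: "u \<noteq> 0 \<Longrightarrow> Im u > 0 \<or> (Im u = 0 \<and> Re u < 0) \<Longrightarrow> Ln2 u = Ln u"
  using Ln_minus[of u] by (auto simp: Ln2_def)

lemma hL_diff: "hL p q k \<mu> L2 z = hL p q k \<mu> L1 z + Re ((\<mu> / of_nat k) * (L2 (uu p q k z) - L1 (uu p q k z)))"
  unfolding hL_def by (simp add: algebra_simps)

lemma hL_Ln2_lower:
  assumes "Im (uu p q k z) < 0"
  shows "hL p q k \<mu> Ln2 z = hL p q k \<mu> Ln z - 2 * pi * Im \<mu> / real k"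
  unfolding hL_diff[of p q k \<mu> Ln2 z Ln] Ln2_lower[OF assms]
  by (simp add: Re_divide field_simps power2_eq_square)

lemma hL_Ln2_upper:
  assumes "uu p q k z \<noteq> 0" "Im (uu p q k z) > 0 \<or> (Im (uu p q k z) = 0 \<and> Re (uu p q k z) < 0)"
  shows "hL p q k \<mu> Ln2 z = hL p q k \<mu> Ln z"
  unfolding hL_diff[of p q k \<mu> Ln2 z Ln] Ln2_upper[OF assms] by simp

lemma ln_bound:
  assumes "0 < cmod (fst z)" "cmod (fst z) < 1" "0 < cmod (snd z)" "cmod (snd z) < 1"
  shows "ln (cmod (uu p q k z)) \<le> real k * (real p * ln (cmod (fst z)))" "real p * ln (cmod (fst z)) \<le> 0"
proof -
  have "cmod (uu p q k z) = (cmod (fst z) ^ p * cmod (snd z) ^ q) ^ k"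
    by (simp add: uu_def norm_mult norm_power)
  then have "ln (cmod (uu p q k z)) = real k * (real p * ln (cmod (fst z)) + real q * ln (cmod (snd z)))"
    using assms by (simp add: ln_mult ln_realpow)
  moreover have "ln (cmod (snd z)) < 0" "ln (cmod (fst z)) < 0" using assms by auto
  ultimately show "ln (cmod (uu p q k z)) \<le> real k * (real p * ln (cmod (fst z)))"
    by (simp add: mult_left_mono mult_nonneg_nonpos)
  show "real p * ln (cmod (fst z)) \<le> 0"
    using \<open>ln (cmod (fst z)) < 0\<close> by (simp add: mult_nonneg_nonpos)
qed

lemma hL_pos_real:
  assumes "u = complex_of_real r" "r > 0" "uu p q k z = u" "k > 0"
  shows "hL p q k \<mu> Ln z = (Re \<mu> * ln r - 1 / r) / real k - real p * ln (cmod (fst z))"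
  using assms unfolding hL_def by (simp add: Ln_of_real Re_divide field_simps) (simp add: power2_eq_square algebra_simps)

lemma hL_neg_real:
  assumes "u = - complex_of_real r" "r > 0" "uu p q k z = u" "k > 0"
  shows "hL p q k \<mu> Ln2 z = (Re \<mu> * ln r - pi * Im \<mu> + 1 / r) / real k - real p * ln (cmod (fst z))"
  using assms unfolding hL_def Ln2_def by (simp add: Ln_of_real Re_divide field_simps) (simp add: power2_eq_square algebra_simps)



lemma local_rep:
  assumes "open N" "z \<in> N" "smooth_on N g" "\<And>y. y \<in> N \<Longrightarrow> g y = F y"
    "(g has_derivative (\<lambda>v. \<kappa> * R v)) (at z)" "\<kappa> \<noteq> 0"
  shows "\<exists>N \<kappa>. open N \<and> z \<in> N \<and> smooth_on N F \<and> \<kappa> \<noteq> (0::real) \<and> (F has_derivative (\<lambda>v. \<kappa> * R v)) (at z)"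
proof -
  have "smooth_on N F" by (rule smooth_on_transform[OF assms(3,4)])
  moreover have "(F has_derivative (\<lambda>v. \<kappa> * R v)) (at z)"
    by (rule has_derivative_transform_within_open[OF assms(5,1,2)]) (use assms(4) in auto)
  ultimately show ?thesis using assms(1,2,6) by blast
qed

lemma cont_of_deriv:
  assumes "\<And>z. z \<in> S \<Longrightarrow> (g has_derivative D z) (at z)"
  shows "continuous_on S g"
  by (rule continuous_at_imp_continuous_on) (use assms has_derivative_continuous in blast)

lemma re_tau_nz:
  assumes x: "fst z \<noteq> 0" and y: "snd z \<noteq> 0" and q: "q > 0" and w: "\<mu> + inverse (uu p q k z) \<noteq> 0"
  shows "\<exists>v. re_tau p q k \<mu> z v \<noteq> 0"
proof -
  define w0 where "w0 = \<mu> + inverse (uu p q k z)"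
  define v where "v = (0::complex, snd z * cnj w0)"
  have K: "of_nat p * fst v / fst z + of_nat q * snd v / snd z = of_nat q * cnj w0"
    using y by (simp add: v_def)
  have "tau p q k \<mu> z v = of_nat q * (cnj w0 * w0)"
    unfolding tau_eq[OF x y] K by (simp add: v_def w0_def divide_inverse algebra_simps)
  also have "cnj w0 * w0 = of_real (cmod w0 ^ 2)"
    using complex_norm_square[of w0] by (simp only: mult.commute)
  finally have "re_tau p q k \<mu> z v = real q * cmod w0 ^ 2"
    unfolding re_tau_def by simp
  moreover have "cmod w0 > 0" using w by (simp add: w0_def)
  ultimately have "re_tau p q k \<mu> z v > 0" using q by simp
  then show ?thesis by (intro exI[of _ v]) simp
qed



theorem proposition4p8:
  fixes p q k :: nat and \<mu> :: complex
  assumes "p > 0" and "q > 0" and "coprime p q" and "k \<ge> 1"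
  shows "\<exists>(U :: (complex \<times> complex) set) (F :: complex \<times> complex \<Rightarrow> real).
           open U \<and> (0, 0) \<in> U \<and>
           smooth_on (U \<inter> off_axes) F \<and>
           (\<forall>z \<in> U \<inter> off_axes. \<exists>F'. (F has_derivative F') (at z) \<and>
               (\<exists>v. F' v \<noteq> 0) \<and>
               (\<forall>v. re_tau p q k \<mu> z v = 0 \<longrightarrow> F' v = 0))"
proof -
  have k0: "k > 0" using assms(4) by simp
  have "\<exists>c1' M. (\<forall>t. (chi1 has_real_derivative c1' t) (at t)) \<and> (\<forall>t. \<bar>c1' t\<bar> \<le> M) \<and> M > 0"
    by (rule chi1_props) blast
  then obtain c1' M where chi0: "\<forall>t. (chi1 has_real_derivative c1' t) (at t)" "\<forall>t. \<bar>c1' t\<bar> \<le> M" "M > 0"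
    by blast
  have chi: "\<And>t. (chi1 has_real_derivative c1' t) (at t)" "\<And>t. \<bar>c1' t\<bar> \<le> M" "M > 0"
    using chi0 by auto
  define \<delta> where "\<delta> = 2 * pi * Im \<mu> / real k"
  define W where "W = \<bar>\<delta>\<bar> * M + 1"
  have W0: "W > 0" unfolding W_def using chi(3) by (simp add: add_nonneg_pos)
  define h where "h = hL p q k \<mu> Ln"
  define h2 where "h2 = hL p q k \<mu> Ln2"
  define F where "F = (\<lambda>z. if Im (uu p q k z) < 0 then h z + (- \<delta>) * chi1 (h z * inverse W) else h z)"
  have "eventually (\<lambda>r. (Re \<mu> - 1) * ln r - 1 / r < 0) (at_right (0::real))" by real_asymp
  moreover have "eventually (\<lambda>r. Re \<mu> * ln r - pi * Im \<mu> + 1 / r > real k * (W + \<bar>\<delta>\<bar>)) (at_right (0::real))" by real_asymp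
  moreover have "eventually (\<lambda>r. 1 / r > cmod \<mu>) (at_right (0::real))" by real_asymp
  ultimately have "eventually (\<lambda>r. (Re \<mu> - 1) * ln r - 1 / r < 0 \<and> Re \<mu> * ln r - pi * Im \<mu> + 1 / r > real k * (W + \<bar>\<delta>\<bar>)
      \<and> 1 / r > cmod \<mu>) (at_right (0::real))"
    by (intro eventually_conj)
  then obtain \<epsilon> :: real where \<epsilon>0: "\<epsilon> > 0" and \<epsilon>:
    "\<And>r. 0 < r \<Longrightarrow> r < \<epsilon> \<Longrightarrow> (Re \<mu> - 1) * ln r - 1 / r < 0 \<and> Re \<mu> * ln r - pi * Im \<mu> + 1 / r > real k * (W + \<bar>\<delta>\<bar>)
      \<and> 1 / r > cmod \<mu>"
    unfolding eventually_at_right_field by auto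
  define U where "U = {z. cmod (fst z) < 1 \<and> cmod (snd z) < 1 \<and> cmod (uu p q k z) < \<epsilon>}"
  define S where "S = U \<inter> off_axes"
  have openU: "open U" unfolding U_def uu_def
    by (intro open_Collect_conj open_Collect_less continuous_intros)
  have U0: "(0, 0) \<in> U" using \<epsilon>0 k0 assms(1) by (simp add: U_def uu_def power_0_left)
  have off: "off_axes = {z. fst z * snd z \<noteq> 0}" unfolding off_axes_def ..
  have openS: "open S" unfolding S_def off
    by (intro open_Int openU open_Collect_neq continuous_intros)
  have Sp: "fst z \<noteq> 0" "snd z \<noteq> 0" "0 < cmod (fst z)" "cmod (fst z) < 1" "0 < cmod (snd z)" "cmod (snd z) < 1"
     "uu p q k z \<noteq> 0" "cmod (uu p q k z) < \<epsilon>" if "z \<in> S" for z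
    using that uu_nz[of z p q k] by (auto simp: S_def U_def off_axes_def)
  have Ln_ok: "(Ln has_field_derivative inverse (uu p q k z)) (at (uu p q k z))"
    if "Im (uu p q k z) \<noteq> 0 \<or> Re (uu p q k z) > 0" for z
    using Ln_deriv that by blast
  have Ln2_ok: "(Ln2 has_field_derivative inverse (uu p q k z)) (at (uu p q k z))"
    if "Re (uu p q k z) < 0" for z
    using Ln2_deriv that by blast
  have dh: "(h has_derivative re_tau p q k \<mu> z) (at z)" if "z \<in> S" "Im (uu p q k z) \<noteq> 0 \<or> Re (uu p q k z) > 0" for z
    unfolding h_def using dhL[OF Sp(1,2)[OF that(1)] k0 Ln_ok[OF that(2)]] .
  have dh2: "(h2 has_derivative re_tau p q k \<mu> z) (at z)" if "z \<in> S" "Re (uu p q k z) < 0" for z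
    unfolding h2_def using dhL[OF Sp(1,2)[OF that(1)] k0 Ln2_ok[OF that(2)]] .
  have contu: "continuous_on UNIV (\<lambda>z. uu p q k z)" unfolding uu_def by (intro continuous_intros)
  have one: "(\<lambda>v. 1 * re_tau p q k \<mu> z v) = re_tau p q k \<mu> z" for z by simp

  have loc: "\<exists>N \<kappa>. open N \<and> z \<in> N \<and> smooth_on N F \<and> \<kappa> \<noteq> (0::real) \<and> (F has_derivative (\<lambda>v. \<kappa> * re_tau p q k \<mu> z v)) (at z)"
    if z: "z \<in> S" for z
  proof -
    consider "Im (uu p q k z) > 0" | "Im (uu p q k z) < 0" | "Im (uu p q k z) = 0" "Re (uu p q k z) > 0"
      | "Im (uu p q k z) = 0" "Re (uu p q k z) < 0"
      using Sp(7)[OF z] complex_eq_iff[of "uu p q k z" 0] by force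
    then show ?thesis
    proof cases
      case 1
      define N where "N = S \<inter> {z. Im (uu p q k z) > 0}"
      have oN: "open N" unfolding N_def uu_def by (intro open_Int openS open_Collect_less continuous_intros)
      have sm: "smooth_on N h" unfolding h_def
        by (rule smooth_hL(1)) (use Sp Ln_ok in \<open>auto simp: N_def\<close>)
      show ?thesis
        by (rule local_rep[OF oN _ sm, where \<kappa>=1]) (use z 1 dh in \<open>auto simp: N_def F_def one\<close>)
    next
      case 2
      define N where "N = S \<inter> {z. Im (uu p q k z) < 0}"
      have oN: "open N" unfolding N_def uu_def by (intro open_Int openS open_Collect_less continuous_intros)
      have sm: "smooth_on N (\<lambda>z. h z + (- \<delta>) * chi1 (h z * inverse W))" unfolding h_def
        by (rule smooth_hL(2)) (use Sp Ln_ok in \<open>auto simp: N_def\<close>)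
      have d0: "(h has_derivative re_tau p q k \<mu> z) (at z)" using dh[OF z] 2 by simp
      have d1: "((\<lambda>z. h z * inverse W) has_derivative (\<lambda>v. re_tau p q k \<mu> z v * inverse W)) (at z)"
        by (rule has_derivative_mult_left[OF d0])
      have d2: "((\<lambda>z. chi1 (h z * inverse W)) has_derivative (\<lambda>v. c1' (h z * inverse W) * (re_tau p q k \<mu> z v * inverse W))) (at z)"
        using has_derivative_compose[OF d1 chi(1)[of "h z * inverse W", unfolded has_field_derivative_def]] .
      have d3: "((\<lambda>z. h z + (- \<delta>) * chi1 (h z * inverse W)) has_derivative
          (\<lambda>v. re_tau p q k \<mu> z v + (- \<delta>) * (c1' (h z * inverse W) * (re_tau p q k \<mu> z v * inverse W)))) (at z)"
        by (intro has_derivative_add d0 has_derivative_mult_right d2)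
      define \<kappa> where "\<kappa> = 1 - \<delta> * c1' (h z * inverse W) * inverse W"
      have eqk: "(\<lambda>v. re_tau p q k \<mu> z v + (- \<delta>) * (c1' (h z * inverse W) * (re_tau p q k \<mu> z v * inverse W)))
          = (\<lambda>v. \<kappa> * re_tau p q k \<mu> z v)"
        by (auto simp: \<kappa>_def algebra_simps)
      have "\<bar>\<delta> * c1' (h z * inverse W)\<bar> \<le> \<bar>\<delta>\<bar> * M" using chi(2)[of "h z * inverse W"] by (simp add: abs_mult mult_left_mono)
      then have "\<bar>\<delta> * c1' (h z * inverse W)\<bar> < W" unfolding W_def by simp
      then have "\<bar>\<delta> * c1' (h z * inverse W) * inverse W\<bar> < 1" using W0 by (simp add: abs_mult field_simps)
      then have k_nz: "\<kappa> \<noteq> 0" unfolding \<kappa>_def by auto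
      show ?thesis
        by (rule local_rep[OF oN _ sm _ d3[unfolded eqk] k_nz]) (use z 2 in \<open>auto simp: N_def F_def\<close>)
    next
      case 3
      define S1 where "S1 = S \<inter> {z. Re (uu p q k z) > 0}"
      have oS1: "open S1" unfolding S1_def uu_def by (intro open_Int openS open_Collect_less continuous_intros)
      have ch: "continuous_on S1 h"
        by (rule cont_of_deriv[where D="\<lambda>z. re_tau p q k \<mu> z"]) (use dh in \<open>auto simp: S1_def\<close>)
      define N where "N = S1 \<inter> h -` {..<0}"
      have oN: "open N" unfolding N_def by (rule continuous_open_preimage[OF ch oS1 open_lessThan])
      define r where "r = Re (uu p q k z)"
      have u_eq: "uu p q k z = complex_of_real r" using 3 by (simp add: r_def complex_eq_iff)
      have r0: "r > 0" using 3 by (simp add: r_def)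
      have rc: "cmod (uu p q k z) = r" using u_eq r0 by simp
      have lb: "ln r \<le> real k * (real p * ln (cmod (fst z)))"
        using ln_bound(1)[OF Sp(3-6)[OF z], of p q k] rc by simp
      have hz: "h z = (Re \<mu> * ln r - 1 / r) / real k - real p * ln (cmod (fst z))"
        unfolding h_def by (rule hL_pos_real[OF u_eq r0 refl k0])
      have "(Re \<mu> - 1) * ln r - 1 / r < 0" using \<epsilon>[OF r0] Sp(8)[OF z] rc by auto
      then have "h z < 0"
        unfolding hz using lb k0 by (simp add: field_simps)
      then have zN: "z \<in> N" using z 3 by (simp add: N_def S1_def)
      have sm: "smooth_on N h" unfolding h_def
        by (rule smooth_hL(1)) (use Sp Ln_ok in \<open>auto simp: N_def S1_def\<close>)
      have eqF: "h y = F y" if "y \<in> N" for y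
      proof -
        have "h y < 0" using that by (simp add: N_def)
        then have "h y * inverse W \<le> 0" using W0 by (simp add: mult_nonpos_nonneg)
        then show ?thesis by (simp add: F_def chi1_0)
      qed
      show ?thesis
        by (rule local_rep[OF oN zN sm eqF, where \<kappa>=1]) (use dh[OF z] 3 in \<open>auto simp: one\<close>)
    next
      case 4
      define S2 where "S2 = S \<inter> {z. Re (uu p q k z) < 0}"
      have oS2: "open S2" unfolding S2_def uu_def by (intro open_Int openS open_Collect_less continuous_intros)
      have ch: "continuous_on S2 h2"
        by (rule cont_of_deriv[where D="\<lambda>z. re_tau p q k \<mu> z"]) (use dh2 in \<open>auto simp: S2_def\<close>)
      define N where "N = S2 \<inter> h2 -` {W + \<bar>\<delta>\<bar><..}"
      have oN: "open N" unfolding N_def by (rule continuous_open_preimage[OF ch oS2 open_greaterThan])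
      define r where "r = - Re (uu p q k z)"
      have u_eq: "uu p q k z = - complex_of_real r" using 4 by (simp add: r_def complex_eq_iff)
      have r0: "r > 0" using 4 by (simp add: r_def)
      have rc: "cmod (uu p q k z) = r" using u_eq r0 by simp
      have hz: "h2 z = (Re \<mu> * ln r - pi * Im \<mu> + 1 / r) / real k - real p * ln (cmod (fst z))"
        unfolding h2_def by (rule hL_neg_real[OF u_eq r0 refl k0])
      have lx: "real p * ln (cmod (fst z)) \<le> 0" using ln_bound(2)[OF Sp(3-6)[OF z]] .
      have "Re \<mu> * ln r - pi * Im \<mu> + 1 / r > real k * (W + \<bar>\<delta>\<bar>)" using \<epsilon>[OF r0] Sp(8)[OF z] rc by auto
      then have "(Re \<mu> * ln r - pi * Im \<mu> + 1 / r) / real k > W + \<bar>\<delta>\<bar>"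
        using k0 by (simp add: field_simps)
      then have "h2 z > W + \<bar>\<delta>\<bar>" unfolding hz using lx by linarith
      then have zN: "z \<in> N" using z 4 by (simp add: N_def S2_def)
      have sm: "smooth_on N h2" unfolding h2_def
        by (rule smooth_hL(1)) (use Sp Ln2_ok in \<open>auto simp: N_def S2_def\<close>)
      have eqF: "h2 y = F y" if "y \<in> N" for y
      proof -
        have yS: "y \<in> S" and yr: "Re (uu p q k y) < 0" and hy: "h2 y > W + \<bar>\<delta>\<bar>"
          using that by (auto simp: N_def S2_def)
        show ?thesis
        proof (cases "Im (uu p q k y) < 0")
          case True
          have "h2 y = h y - \<delta>" unfolding h2_def h_def \<delta>_def by (rule hL_Ln2_lower[OF True])
          then have "h y \<ge> W" using hy by linarith
          then have "h y * inverse W \<ge> 1" using W0 by (simp add: field_simps)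
          then show ?thesis using True \<open>h2 y = h y - \<delta>\<close> by (simp add: F_def chi1_1)
        next
          case False
          then have "Im (uu p q k y) > 0 \<or> (Im (uu p q k y) = 0 \<and> Re (uu p q k y) < 0)" using yr by auto
          then have "h2 y = h y" unfolding h2_def h_def by (rule hL_Ln2_upper[OF Sp(7)[OF yS]])
          then show ?thesis using False by (simp add: F_def)
        qed
      qed
      show ?thesis
        by (rule local_rep[OF oN zN sm eqF, where \<kappa>=1]) (use dh2[OF z] 4 in \<open>auto simp: one\<close>)
    qed
  qed

  have smF: "smooth_on S F"
    by (rule smooth_on_local[OF openS]) (use loc in blast)
  have der: "\<exists>F'. (F has_derivative F') (at z) \<and> (\<exists>v. F' v \<noteq> 0) \<and> (\<forall>v. re_tau p q k \<mu> z v = 0 \<longrightarrow> F' v = 0)"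
    if z: "z \<in> S" for z
  proof -
    obtain N \<kappa> where k: "\<kappa> \<noteq> 0" and d: "(F has_derivative (\<lambda>v. \<kappa> * re_tau p q k \<mu> z v)) (at z)"
      using loc[OF z] by blast
    have "cmod (inverse (uu p q k z)) > cmod \<mu>"
    proof -
      have r0: "0 < cmod (uu p q k z)" using Sp(7)[OF z] by simp
      have "1 / cmod (uu p q k z) > cmod \<mu>" using \<epsilon>[OF r0 Sp(8)[OF z]] by blast
      then show ?thesis by (simp add: norm_inverse divide_inverse)
    qed
    then have "\<mu> + inverse (uu p q k z) \<noteq> 0"
      by (metis add_eq_0_iff norm_minus_cancel order_less_irrefl)
    then obtain v where v: "re_tau p q k \<mu> z v \<noteq> 0"
      using re_tau_nz[OF Sp(1,2)[OF z] assms(2)] by blast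
    show ?thesis
    proof (intro exI[of _ "\<lambda>v. \<kappa> * re_tau p q k \<mu> z v"] conjI allI impI)
      show "(F has_derivative (\<lambda>v. \<kappa> * re_tau p q k \<mu> z v)) (at z)" by (rule d)
      show "\<exists>v. \<kappa> * re_tau p q k \<mu> z v \<noteq> 0" using v k by (intro exI[of _ v]) simp
    next
      fix v' assume "re_tau p q k \<mu> z v' = 0"
      then show "\<kappa> * re_tau p q k \<mu> z v' = 0" by simp
    qed
  qed
  show ?thesis
    by (rule exI[of _ U], rule exI[of _ F]) (use openU U0 smF der in \<open>auto simp: S_def\<close>)
qed


end
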